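(* There exist pairs of measurement channels $\Phi_M,\Phi_N$ corresponding to commuting $2$-outcome POVMs ($[M_0,N_0]=[M_1,N_1]=0$) that form a Maximal Entanglement Best Case pair. For instance, $M_0=\begin{pmatrix}0.9&0\\0&0.6\end{pmatrix}$, $M_1=I-M_0$, $N_0=\begin{pmatrix}0.5&0\\0&0.2\end{pmatrix}$, $N_1=I-N_0$, for which $M_0-N_0=0.4\,I_2$, give a MEBC pair.
   Context: The measurement channel of a POVM $M$ is $\Phi_M(\rho)=\sum_i\operatorname{Tr}(\rho M_i)\,|i\rangle\langle i|$. With $\Delta_\Phi=\Phi_M-\Phi_N$, Choi operator $J(\mathcal{S})=\sum_{ij}\mathcal{S}(|i\rangle\langle j|)\otimes|i\rangle\langle j|$, input dimension $d$, ME-norm $\|\mathcal{S}\|_{\mathrm{ME}}=\|J(\mathcal{S})/d\|_1$ and diamond norm $\|\mathcal{S}\|_\diamond=\max_{\rho_{AA'}}\|(\mathcal{S}\otimes I_{A'})\rho_{AA'}\|_1$, the pair is Maximal Entanglement Best Case (MEBC) if $\|\Delta_\Phi\|_{\mathrm{ME}}=\|\Delta_\Phi\|_\diamond$, i.e. a maximally entangled input state is optimal for discriminating the two channels with uniform priors. *)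

theory Defs
  imports Complex_Main "Jordan_Normal_Form.Matrix"
begin

definition mtrace :: "complex mat \<Rightarrow> complex" where
  "mtrace A = (\<Sum>i<dim_row A. A $$ (i,i))"

definition adjoint :: "complex mat \<Rightarrow> complex mat" where
  "adjoint A = mat (dim_col A) (dim_row A) (\<lambda>(i,j). cnj (A $$ (j,i)))"

definition psd :: "nat \<Rightarrow> complex mat \<Rightarrow> bool" where
  "psd n A \<longleftrightarrow> A \<in> carrier_mat n n \<and> adjoint A = A \<and>
     (\<forall>v \<in> carrier_vec n. 0 \<le> Re (\<Sum>i<n. \<Sum>j<n. cnj (v $ i) * A $$ (i,j) * v $ j))"

definition mat_sqrt :: "nat \<Rightarrow> complex mat \<Rightarrow> complex mat" where
  "mat_sqrt n A = (THE B. psd n B \<and> B * B = A)"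

definition trace_norm :: "complex mat \<Rightarrow> real" where
  "trace_norm X = Re (mtrace (mat_sqrt (dim_col X) (adjoint X * X)))"

definition density :: "nat \<Rightarrow> complex mat \<Rightarrow> bool" where
  "density n \<rho> \<longleftrightarrow> psd n \<rho> \<and> mtrace \<rho> = 1"

definition ketbra :: "nat \<Rightarrow> nat \<Rightarrow> nat \<Rightarrow> complex mat" where
  "ketbra n i j = mat n n (\<lambda>(a,b). if a = i \<and> b = j then 1 else 0)"

text \<open>Kronecker (tensor) product, first factor is the most significant index.\<close>
definition kron :: "complex mat \<Rightarrow> complex mat \<Rightarrow> complex mat" where
  "kron A B = mat (dim_row A * dim_row B) (dim_col A * dim_col B)
     (\<lambda>(i,j). A $$ (i div dim_row B, j div dim_col B) * B $$ (i mod dim_row B, j mod dim_col B))"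

text \<open>A map \<open>S\<close> from d x d matrices to k x k matrices.
  Choi operator \<open>J(S) = \<Sum>_{ij} S(|i\<rangle>\<langle>j|) \<otimes> |i\<rangle>\<langle>j|\<close> (sum written entrywise).\<close>
definition choi :: "nat \<Rightarrow> nat \<Rightarrow> (complex mat \<Rightarrow> complex mat) \<Rightarrow> complex mat" where
  "choi d k S = mat (k*d) (k*d)
     (\<lambda>(r,c). \<Sum>i<d. \<Sum>j<d. kron (S (ketbra d i j)) (ketbra d i j) $$ (r,c))"

text \<open>Block (a,b) of a matrix on \<open>A \<otimes> A'\<close> with dim A = d, dim A' = n.\<close>
definition block :: "nat \<Rightarrow> nat \<Rightarrow> complex mat \<Rightarrow> nat \<Rightarrow> nat \<Rightarrow> complex mat" where
  "block d n \<rho> a b = mat d d (\<lambda>(i,j). \<rho> $$ (i*n + a, j*n + b))"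

text \<open>\<open>(S \<otimes> I_{A'}) \<rho>\<close> where \<open>\<rho> = \<Sum>_{ab} block_{ab} \<otimes> |a\<rangle>\<langle>b|\<close>.\<close>
definition ext_id :: "nat \<Rightarrow> nat \<Rightarrow> nat \<Rightarrow> (complex mat \<Rightarrow> complex mat) \<Rightarrow> complex mat \<Rightarrow> complex mat" where
  "ext_id d k n S \<rho> = mat (k*n) (k*n)
     (\<lambda>(r,c). \<Sum>a<n. \<Sum>b<n. kron (S (block d n \<rho> a b)) (ketbra n a b) $$ (r,c))"

definition me_norm :: "nat \<Rightarrow> nat \<Rightarrow> (complex mat \<Rightarrow> complex mat) \<Rightarrow> real" where
  "me_norm d k S = trace_norm ((1 / of_nat d) \<cdot>\<^sub>m choi d k S)"

definition diamond_norm :: "nat \<Rightarrow> nat \<Rightarrow> (complex mat \<Rightarrow> complex mat) \<Rightarrow> real" where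
  "diamond_norm d k S = Sup {trace_norm (ext_id d k n S \<rho>) | n \<rho>. 1 \<le> n \<and> density (d*n) \<rho>}"

definition is_povm :: "nat \<Rightarrow> nat \<Rightarrow> (nat \<Rightarrow> complex mat) \<Rightarrow> bool" where
  "is_povm d K M \<longleftrightarrow> (\<forall>i<K. psd d (M i)) \<and>
     (\<forall>r<d. \<forall>c<d. (\<Sum>i<K. M i $$ (r,c)) = (1\<^sub>m d) $$ (r,c))"

definition meas_channel :: "nat \<Rightarrow> (nat \<Rightarrow> complex mat) \<Rightarrow> complex mat \<Rightarrow> complex mat" where
  "meas_channel K M \<rho> = mat K K (\<lambda>(i,j). if i = j then mtrace (\<rho> * M i) else 0)"

definition MEBC :: "nat \<Rightarrow> nat \<Rightarrow> (nat \<Rightarrow> complex mat) \<Rightarrow> (nat \<Rightarrow> complex mat) \<Rightarrow> bool" where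
  "MEBC d K M N \<longleftrightarrow>
     (let \<Delta> = (\<lambda>\<rho>. meas_channel K M \<rho> - meas_channel K N \<rho>)
      in me_norm d K \<Delta> = diamond_norm d K \<Delta>)"

definition M0ex :: "complex mat" where
  "M0ex = mat 2 2 (\<lambda>(i,j). if i = j then (if i = 0 then 0.9 else 0.6) else 0)"
definition N0ex :: "complex mat" where
  "N0ex = mat 2 2 (\<lambda>(i,j). if i = j then (if i = 0 then 0.5 else 0.2) else 0)"
definition Mex :: "nat \<Rightarrow> complex mat" where
  "Mex i = (if i = 0 then M0ex else 1\<^sub>m 2 - M0ex)"
definition Nex :: "nat \<Rightarrow> complex mat" where
  "Nex i = (if i = 0 then N0ex else 1\<^sub>m 2 - N0ex)"

end

theory Submission
  imports Defs
begin


lemma psd_fun: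
  assumes "psd n B"
  shows "0 \<le> Re (\<Sum>i<n. \<Sum>j<n. cnj (f i) * B $$ (i,j) * f j)"
proof -
  have "vec n f \<in> carrier_vec n" by simp
  with assms have "0 \<le> Re (\<Sum>i<n. \<Sum>j<n. cnj (vec n f $ i) * B $$ (i,j) * vec n f $ j)"
    unfolding psd_def by blast
  also have "(\<Sum>i<n. \<Sum>j<n. cnj (vec n f $ i) * B $$ (i,j) * vec n f $ j) = (\<Sum>i<n. \<Sum>j<n. cnj (f i) * B $$ (i,j) * f j)"
    by (intro sum.cong refl) simp
  finally show ?thesis .
qed

lemma psd_herm:
  assumes "psd n B" "i < n" "j < n"
  shows "B $$ (i,j) = cnj (B $$ (j,i))"
proof -
  have c: "B \<in> carrier_mat n n" and a: "adjoint B = B" using assms unfolding psd_def by auto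
  have "adjoint B $$ (i,j) = cnj (B $$ (j,i))" using c assms unfolding adjoint_def by auto
  with a show ?thesis by simp
qed

lemma real_quad:
  fixes a b :: real
  assumes "\<And>t. 0 \<le> 2*t*a + t^2*b"
  shows "a = 0"
proof (rule ccontr)
  assume "a \<noteq> 0"
  define s where "s = \<bar>b\<bar> + 1"
  define t where "t = - a / s"
  have p: "s > 0" unfolding s_def by simp
  have "0 \<le> 2*t*a + t^2*b" by (rule assms)
  hence "0 \<le> (2*t*a + t^2*b) * s^2" by simp
  also have "(2*t*a + t^2*b) * s^2 = a^2 * (b - 2*s)"
    unfolding t_def using p by (simp add: field_simps power2_eq_square)
  also have "\<dots> < 0"
  proof -
    have "a^2 > 0" using \<open>a \<noteq> 0\<close> by simp
    moreover have "b - 2*s < 0" using s_def by arith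
    ultimately show ?thesis by (simp add: mult_pos_neg)
  qed
  finally show False by simp
qed

lemma sum_if_outer:
  fixes k n :: nat
  assumes "k < n"
  shows "(\<Sum>i<n. \<Sum>j<n. if i = k then h i j else 0) = (\<Sum>j<n. (h k j :: 'a::comm_monoid_add))"
proof -
  have "(\<Sum>i<n. \<Sum>j<n. if i = k then h i j else 0) = (\<Sum>i<n. if i = k then (\<Sum>j<n. h i j) else 0)"
    by (intro sum.cong refl) auto
  also have "\<dots> = (\<Sum>j<n. h k j)" using assms by (subst sum.delta) auto
  finally show ?thesis .
qed

lemma psd_null:
  assumes P: "psd n B" and k: "k < n"
    and z0: "Re (\<Sum>i<n. \<Sum>j<n. cnj (f i) * B $$ (i,j) * f j) = 0"
  shows "(\<Sum>j<n. B $$ (k,j) * f j) = 0"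
proof -
  define z where "z = (\<Sum>j<n. B $$ (k,j) * f j)"
  define Q where "Q = (\<Sum>i<n. \<Sum>j<n. cnj (f i) * B $$ (i,j) * f j)"
  have cz: "(\<Sum>i<n. cnj (f i) * B $$ (i,k)) = cnj z"
  proof -
    have "(\<Sum>i<n. cnj (f i) * B $$ (i,k)) = (\<Sum>i<n. cnj (B $$ (k,i) * f i))"
      by (intro sum.cong refl) (simp add: psd_herm[OF P _ k] mult.commute)
    also have "\<dots> = cnj z" unfolding z_def by (simp add: cnj_sum)
    finally show ?thesis .
  qed
  have key: "0 \<le> 2*t*Re (cnj c * z) + t^2 * Re (cnj c * c * B $$ (k,k))" for c t
  proof -
    define w where "w = complex_of_real t * c"
    define g where "g i = f i + (if i = k then w else 0)" for i
    have trm: "cnj (g i) * B $$ (i,j) * g j = cnj (f i) * B $$ (i,j) * f j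
       + (if j = k then cnj (f i) * B $$ (i,j) * w else 0)
       + (if i = k then cnj w * B $$ (i,j) * f j else 0)
       + (if i = k then (if j = k then cnj w * w * B $$ (i,j) else 0) else 0)" for i j
      by (simp add: g_def algebra_simps)
    have exp: "(\<Sum>i<n. \<Sum>j<n. cnj (g i) * B $$ (i,j) * g j)
       = Q + w * cnj z + cnj w * z + cnj w * w * B $$ (k,k)"
    proof -
      have "(\<Sum>i<n. \<Sum>j<n. cnj (g i) * B $$ (i,j) * g j)
        = Q + (\<Sum>i<n. cnj (f i) * B $$ (i,k) * w) + (\<Sum>j<n. cnj w * B $$ (k,j) * f j)
          + cnj w * w * B $$ (k,k)"
        unfolding trm Q_def sum.distrib using k by (simp add: sum_if_outer)
      also have "(\<Sum>i<n. cnj (f i) * B $$ (i,k) * w) = w * cnj z"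
        using cz by (simp add: sum_distrib_left[symmetric] mult.commute)
      also have "(\<Sum>j<n. cnj w * B $$ (k,j) * f j) = cnj w * z"
        unfolding z_def by (simp add: sum_distrib_left mult.assoc)
      finally show ?thesis .
    qed
    have "0 \<le> Re (\<Sum>i<n. \<Sum>j<n. cnj (g i) * B $$ (i,j) * g j)" by (rule psd_fun[OF P])
    also have "\<dots> = 2*t*Re (cnj c * z) + t^2 * Re (cnj c * c * B $$ (k,k))"
      unfolding exp using z0 unfolding Q_def[symmetric]
      by (simp add: w_def power2_eq_square algebra_simps)
    finally show ?thesis .
  qed
  have r: "Re z = 0"
  proof (rule real_quad)
    fix t show "0 \<le> 2*t*Re z + t^2 * Re (B $$ (k,k))" using key[where c=1 and t=t] by simp
  qed
  have i: "Im z = 0"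
  proof (rule real_quad)
    fix t show "0 \<le> 2*t*Im z + t^2 * Re (B $$ (k,k))" using key[where c="\<i>" and t=t] by simp
  qed
  show ?thesis using r i unfolding z_def[symmetric] by (simp add: complex_eq_iff)
qed


lemma mult_entry:
  assumes "A \<in> carrier_mat n n" "A' \<in> carrier_mat n n" "i < n" "j < n"
  shows "(A * A') $$ (i,j) = (\<Sum>k<n. A $$ (i,k) * A' $$ (k,j))"
  using assms by (simp add: scalar_prod_def lessThan_atLeast0)

definition T3 :: "nat \<Rightarrow> (nat \<Rightarrow> nat \<Rightarrow> complex) \<Rightarrow> (nat \<Rightarrow> nat \<Rightarrow> complex) \<Rightarrow> (nat \<Rightarrow> nat \<Rightarrow> complex) \<Rightarrow> complex" where
  "T3 n x y z = (\<Sum>j<n. \<Sum>k<n. \<Sum>l<n. x j k * y k l * z l j)"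

lemma T3_cyc: "T3 n x y z = T3 n y z x"
proof -
  have "T3 n x y z = (\<Sum>k<n. \<Sum>j<n. \<Sum>l<n. x j k * y k l * z l j)" unfolding T3_def by (rule sum.swap)
  also have "\<dots> = (\<Sum>k<n. \<Sum>l<n. \<Sum>j<n. x j k * y k l * z l j)" by (rule sum.cong[OF refl], rule sum.swap)
  also have "\<dots> = T3 n y z x" unfolding T3_def by (simp add: mult_ac)
  finally show ?thesis .
qed

lemma T3_prod:
  assumes "\<And>i j. i < n \<Longrightarrow> j < n \<Longrightarrow> (\<Sum>k<n. x i k * y k j) = (\<Sum>k<n. x' i k * y' k j)"
  shows "T3 n x y z = T3 n x' y' z"
proof -
  have e: "T3 n x y z = (\<Sum>j<n. \<Sum>l<n. (\<Sum>k<n. x j k * y k l) * z l j)" for x y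
    unfolding T3_def sum_distrib_right by (rule sum.cong[OF refl], rule sum.swap)
  show ?thesis unfolding e using assms by simp
qed

lemma T3_expand:
  "T3 n (\<lambda>i j. b i j - c i j) (\<lambda>i j. b i j + c i j) (\<lambda>i j. b i j - c i j) =
   T3 n b b b + T3 n b c b - T3 n c b b - T3 n c c b - T3 n b b c - T3 n b c c + T3 n c b c + T3 n c c c"
  unfolding T3_def by (simp add: algebra_simps sum.distrib sum_subtractf)

lemma psd_carrier: "psd n B \<Longrightarrow> B \<in> carrier_mat n n" unfolding psd_def by auto

lemma psd_sqrt_unique:
  assumes PB: "psd n B" and PC: "psd n C" and BC: "B * B = C * C"
  shows "B = C"
proof -
  define b where "b i j = B $$ (i,j)" for i j
  define c where "c i j = C $$ (i,j)" for i j
  define d where "d i j = b i j - c i j" for i j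
  define e where "e i j = b i j + c i j" for i j
  have cB: "B \<in> carrier_mat n n" and cC: "C \<in> carrier_mat n n" using PB PC by (auto simp: psd_carrier)
  have sq: "(\<Sum>k<n. b i k * b k j) = (\<Sum>k<n. c i k * c k j)" if "i < n" "j < n" for i j
    using mult_entry[OF cB cB that] mult_entry[OF cC cC that] BC unfolding b_def c_def by simp
  have dh: "d j k = cnj (d k j)" if "j < n" "k < n" for j k
    unfolding d_def b_def c_def using psd_herm[OF PB that] psd_herm[OF PC that] by simp
  have T0: "T3 n d e d = 0"
  proof -
    have 1: "T3 n b b b = T3 n c c b" by (rule T3_prod, rule sq)
    have 2: "T3 n b b c = T3 n c c c" by (rule T3_prod, rule sq)
    have "T3 n d e d = T3 n b b b + T3 n b c b - T3 n c b b - T3 n c c b - T3 n b b c - T3 n b c c + T3 n c b c + T3 n c c c"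
      unfolding d_def[abs_def] e_def[abs_def] by (rule T3_expand)
    also have "\<dots> = 0" using 1 2 T3_cyc[of n b c b] T3_cyc[of n c b b] T3_cyc[of n b c c] T3_cyc[of n c b c]
      by simp
    finally show ?thesis .
  qed
  define qB where "qB j = (\<Sum>k<n. \<Sum>l<n. cnj (d k j) * B $$ (k,l) * d l j)" for j
  define qC where "qC j = (\<Sum>k<n. \<Sum>l<n. cnj (d k j) * C $$ (k,l) * d l j)" for j
  have "T3 n d e d = (\<Sum>j<n. \<Sum>k<n. \<Sum>l<n. cnj (d k j) * B $$ (k,l) * d l j + cnj (d k j) * C $$ (k,l) * d l j)"
    unfolding T3_def
    apply (rule sum.cong[OF refl])
    apply (rule sum.cong[OF refl])
    apply (rule sum.cong[OF refl])
    subgoal for j k l using dh[of j k] by (simp add: e_def b_def c_def algebra_simps)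
    done
  also have "\<dots> = (\<Sum>j<n. qB j + qC j)"
    unfolding qB_def qC_def by (simp add: sum.distrib)
  finally have "T3 n d e d = (\<Sum>j<n. qB j + qC j)" .
  moreover have "(\<Sum>j<n. Re (qB j) + Re (qC j)) = Re (\<Sum>j<n. qB j + qC j)" by (simp add: Re_sum)
  ultimately have "(\<Sum>j<n. Re (qB j) + Re (qC j)) = 0" using T0 by simp
  moreover have nB: "0 \<le> Re (qB j)" for j unfolding qB_def by (rule psd_fun[OF PB])
  moreover have nC: "0 \<le> Re (qC j)" for j unfolding qC_def by (rule psd_fun[OF PC])
  ultimately have "\<forall>j\<in>{..<n}. Re (qB j) + Re (qC j) = 0"
    by (subst sum_nonneg_eq_0_iff[symmetric]) (auto intro: add_nonneg_nonneg)
  hence s0: "Re (qB j) + Re (qC j) = 0" if "j < n" for j using that by auto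
  have zB: "Re (qB j) = 0" if "j < n" for j using s0[OF that] nB[of j] nC[of j] by linarith
  have zC: "Re (qC j) = 0" if "j < n" for j using s0[OF that] nB[of j] nC[of j] by linarith
  have BD: "(\<Sum>l<n. B $$ (k,l) * d l j) = 0" if "k < n" "j < n" for k j
    using psd_null[OF PB that(1), of "\<lambda>l. d l j"] zB[OF that(2)] unfolding qB_def by simp
  have CD: "(\<Sum>l<n. C $$ (k,l) * d l j) = 0" if "k < n" "j < n" for k j
    using psd_null[OF PC that(1), of "\<lambda>l. d l j"] zC[OF that(2)] unfolding qC_def by simp
  have DD: "(\<Sum>l<n. d k l * d l j) = 0" if "k < n" "j < n" for k j
  proof -
    have "(\<Sum>l<n. d k l * d l j) = (\<Sum>l<n. B $$ (k,l) * d l j) - (\<Sum>l<n. C $$ (k,l) * d l j)"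
      unfolding sum_subtractf[symmetric] by (intro sum.cong refl) (simp add: d_def b_def c_def algebra_simps)
    thus ?thesis using BD[OF that] CD[OF that] by simp
  qed
  have d0: "d l j = 0" if "l < n" "j < n" for l j
  proof -
    have "(\<Sum>l<n. cnj (d l j) * d l j) = (\<Sum>l<n. d j l * d l j)"
      apply (rule sum.cong[OF refl])
      subgoal for l using dh[of j l] that by simp
      done
    hence "(\<Sum>l<n. cnj (d l j) * d l j) = 0" using DD[OF that(2) that(2)] by simp
    hence "Re (\<Sum>l<n. cnj (d l j) * d l j) = 0" by simp
    hence "(\<Sum>l<n. (Re (d l j))^2 + (Im (d l j))^2) = 0"
      by (simp add: Re_sum power2_eq_square)
    hence "\<forall>l\<in>{..<n}. (Re (d l j))^2 + (Im (d l j))^2 = 0"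
      by (subst sum_nonneg_eq_0_iff[symmetric]) auto
    with that show ?thesis by (auto simp: complex_eq_iff)
  qed
  show ?thesis
    by (rule eq_matI) (use cB cC d0 in \<open>auto simp: d_def b_def c_def\<close>)
qed

lemma mat_sqrt_sq:
  assumes "psd n B"
  shows "mat_sqrt n (B * B) = B"
  unfolding mat_sqrt_def
  by (rule the_equality) (use assms psd_sqrt_unique in auto)


lemma sum_split_add:
  fixes n m :: nat
  shows "(\<Sum>r<n+m. g r) = (\<Sum>a<n. g a) + (\<Sum>a<m. (g (n + a) :: 'a::comm_monoid_add))"
  by (induction m) (simp_all add: add.assoc)

lemma sum_split2:
  fixes n :: nat
  shows "(\<Sum>r<2*n. g r) = (\<Sum>a<n. g a) + (\<Sum>a<n. (g (n + a) :: 'a::comm_monoid_add))"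
  using sum_split_add[where n=n and m=n and g=g] by (simp add: mult_2)

lemma dm_simps:
  fixes a n :: nat
  assumes "a < n"
  shows "a div n = 0" "a mod n = a" "(n + a) div n = 1" "(n + a) mod n = a"
  using assms by auto

lemma dsum2:
  fixes n :: nat and F :: "nat \<Rightarrow> nat \<Rightarrow> 'a::comm_monoid_add"
  shows "(\<Sum>r<2*n. \<Sum>s<2*n. F r s) = (\<Sum>a<n. \<Sum>b<n. F a b) + (\<Sum>a<n. \<Sum>b<n. F a (n+b))
     + (\<Sum>a<n. \<Sum>b<n. F (n+a) b) + (\<Sum>a<n. \<Sum>b<n. F (n+a) (n+b))"
  unfolding sum_split2 sum.distrib by (simp add: ac_simps)

lemma trace_norm_blk:
  fixes n :: nat and \<tau> :: "nat \<Rightarrow> nat \<Rightarrow> complex" and c :: real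
  assumes herm: "\<And>a b. a < n \<Longrightarrow> b < n \<Longrightarrow> \<tau> a b = cnj (\<tau> b a)"
    and pos: "\<And>u. 0 \<le> Re (\<Sum>a<n. \<Sum>b<n. cnj (u a) * \<tau> a b * u b)"
    and c: "0 \<le> c"
  shows "trace_norm (mat (2*n) (2*n) (\<lambda>(r,s). if r div n = s div n then
            (if r div n = 0 then complex_of_real c else - complex_of_real c) * \<tau> (r mod n) (s mod n) else 0))
         = 2 * c * Re (\<Sum>a<n. \<tau> a a)"
proof -
  define X where "X = mat (2*n) (2*n) (\<lambda>(r,s). if r div n = s div n then
            (if r div n = 0 then complex_of_real c else - complex_of_real c) * \<tau> (r mod n) (s mod n) else 0)"
  define B where "B = mat (2*n) (2*n) (\<lambda>(r,s). if r div n = s div n then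
            complex_of_real c * \<tau> (r mod n) (s mod n) else 0)"
  have cX: "X \<in> carrier_mat (2*n) (2*n)" and cB: "B \<in> carrier_mat (2*n) (2*n)"
    unfolding X_def B_def by auto
  have modlt: "r mod n < n" if "r < 2*n" for r using that
    by (metis mod_less_divisor gr_zeroI mult_0_right not_less_zero)
  have adjX: "adjoint X = X"
  proof (rule eq_matI)
    fix i j assume "i < dim_row X" "j < dim_col X"
    hence ij: "i < 2*n" "j < 2*n" using cX by auto
    show "adjoint X $$ (i,j) = X $$ (i,j)"
      using ij herm[OF modlt[OF ij(1)] modlt[OF ij(2)]] unfolding adjoint_def X_def by auto
  qed (use cX in \<open>auto simp: adjoint_def\<close>)
  have adjB: "adjoint B = B"
  proof (rule eq_matI)
    fix i j assume "i < dim_row B" "j < dim_col B"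
    hence ij: "i < 2*n" "j < 2*n" using cB by auto
    show "adjoint B $$ (i,j) = B $$ (i,j)"
      using ij herm[OF modlt[OF ij(1)] modlt[OF ij(2)]] unfolding adjoint_def B_def by auto
  qed (use cB in \<open>auto simp: adjoint_def\<close>)
  have XX: "X * X = B * B"
  proof (rule eq_matI)
    fix i j assume "i < dim_row (B * B)" "j < dim_col (B * B)"
    hence ij: "i < 2*n" "j < 2*n" using cB by auto
    show "(X * X) $$ (i,j) = (B * B) $$ (i,j)"
      unfolding mult_entry[OF cX cX ij] mult_entry[OF cB cB ij]
      by (rule sum.cong[OF refl]) (use ij in \<open>auto simp: X_def B_def\<close>)
  qed (use cX cB in auto)
  have psdB: "psd (2*n) B"
    unfolding psd_def
  proof (intro conjI ballI)
    fix v :: "complex vec" assume "v \<in> carrier_vec (2*n)"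
    let ?F = "\<lambda>i j. cnj (v $ i) * B $$ (i,j) * v $ j"
    have "(\<Sum>i<2*n. \<Sum>j<2*n. ?F i j) =
       complex_of_real c * (\<Sum>a<n. \<Sum>b<n. cnj (v $ a) * \<tau> a b * v $ b) +
       complex_of_real c * (\<Sum>a<n. \<Sum>b<n. cnj (v $ (n+a)) * \<tau> a b * v $ (n+b))"
      unfolding dsum2 by (simp add: B_def dm_simps sum_distrib_left mult_ac)
    hence "Re (\<Sum>i<2*n. \<Sum>j<2*n. ?F i j) = c * Re (\<Sum>a<n. \<Sum>b<n. cnj (v $ a) * \<tau> a b * v $ b) +
       c * Re (\<Sum>a<n. \<Sum>b<n. cnj (v $ (n+a)) * \<tau> a b * v $ (n+b))" by simp
    also have "\<dots> \<ge> 0" using pos[of "\<lambda>a. v $ a"] pos[of "\<lambda>a. v $ (n+a)"] c by simp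
    finally show "0 \<le> Re (\<Sum>i<2*n. \<Sum>j<2*n. ?F i j)" .
  qed (use cB adjB in auto)
  have "trace_norm X = Re (mtrace B)"
    unfolding trace_norm_def using cX adjX XX mat_sqrt_sq[OF psdB] by simp
  also have "mtrace B = (\<Sum>r<2*n. complex_of_real c * \<tau> (r mod n) (r mod n))"
    unfolding mtrace_def using cB by (intro sum.cong) (auto simp: B_def)
  also have "\<dots> = 2 * complex_of_real c * (\<Sum>a<n. \<tau> a a)"
    unfolding sum_split2 by (simp add: dm_simps sum_distrib_left[symmetric])
  finally show ?thesis unfolding X_def by simp
qed



lemma tr2:
  assumes "Y \<in> carrier_mat 2 2" "M \<in> carrier_mat 2 2"
  shows "mtrace (Y * M) = Y$$(0,0)*M$$(0,0) + Y$$(0,1)*M$$(1,0) + Y$$(1,0)*M$$(0,1) + Y$$(1,1)*M$$(1,1)"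
proof -
  have "mtrace (Y * M) = (\<Sum>i<2. (Y * M) $$ (i,i))" unfolding mtrace_def using assms by simp
  also have "\<dots> = (\<Sum>i<2. \<Sum>k<2. Y $$ (i,k) * M $$ (k,i))"
    by (intro sum.cong refl mult_entry[OF assms]) auto
  also have "\<dots> = Y$$(0,0)*M$$(0,0) + Y$$(0,1)*M$$(1,0) + Y$$(1,0)*M$$(0,1) + Y$$(1,1)*M$$(1,1)"
    by (simp add: numeral_2_eq_2)
  finally show ?thesis .
qed

lemma carr: "M0ex \<in> carrier_mat 2 2" "N0ex \<in> carrier_mat 2 2"
  "Mex i \<in> carrier_mat 2 2" "Nex i \<in> carrier_mat 2 2"
  by (auto simp: M0ex_def N0ex_def Mex_def Nex_def)

lemma dims[simp]: "dim_row M0ex = 2" "dim_col M0ex = 2" "dim_row N0ex = 2" "dim_col N0ex = 2"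
  by (auto simp: M0ex_def N0ex_def)

lemma ents:
  "M0ex $$ (0,0) = 9/10" "M0ex $$ (0,Suc 0) = 0" "M0ex $$ (Suc 0,0) = 0" "M0ex $$ (Suc 0,Suc 0) = 6/10"
  "N0ex $$ (0,0) = 5/10" "N0ex $$ (0,Suc 0) = 0" "N0ex $$ (Suc 0,0) = 0" "N0ex $$ (Suc 0,Suc 0) = 2/10"
  by (auto simp: M0ex_def N0ex_def)

lemma less2: "(i::nat) < 2 \<Longrightarrow> i = 0 \<or> i = 1" by auto

definition Dl :: "complex mat \<Rightarrow> complex mat" where
  "Dl \<rho> = meas_channel 2 Mex \<rho> - meas_channel 2 Nex \<rho>"

lemma mt:
  assumes Y: "Y \<in> carrier_mat 2 2"
  shows "mtrace (Y * Mex 0) = 9/10*Y$$(0,0) + 6/10*Y$$(1,1)"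
    "mtrace (Y * Mex (Suc 0)) = 1/10*Y$$(0,0) + 4/10*Y$$(1,1)"
    "mtrace (Y * Nex 0) = 5/10*Y$$(0,0) + 2/10*Y$$(1,1)"
    "mtrace (Y * Nex (Suc 0)) = 5/10*Y$$(0,0) + 8/10*Y$$(1,1)"
  unfolding tr2[OF Y carr(3)] tr2[OF Y carr(4)]
  by (simp_all add: Mex_def Nex_def ents carr field_simps)

lemma delta_formula:
  assumes Y: "Y \<in> carrier_mat 2 2"
  shows "Dl Y = mat 2 2 (\<lambda>(p,q). if p = q then (if p = 0 then 2/5 else -2/5) * (Y$$(0,0) + Y$$(1,1)) else 0)"
proof (rule eq_matI)
  fix i j assume "i < dim_row (mat 2 2 (\<lambda>(p,q). if p = q then (if p = 0 then 2/5 else -2/5) * (Y$$(0,0) + Y$$(1,1)) else (0::complex)))"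
    "j < dim_col (mat 2 2 (\<lambda>(p,q). if p = q then (if p = 0 then 2/5 else -2/5) * (Y$$(0,0) + Y$$(1,1)) else (0::complex)))"
  hence ij: "i < 2" "j < 2" by auto
  have "i = 0 \<or> i = 1" "j = 0 \<or> j = 1" using ij by auto
  then show "Dl Y $$ (i,j) = mat 2 2 (\<lambda>(p,q). if p = q then (if p = 0 then 2/5 else -2/5) * (Y$$(0,0) + Y$$(1,1)) else 0) $$ (i,j)"
    by (elim disjE) (simp_all add: Dl_def meas_channel_def mt[OF Y] algebra_simps)
qed (auto simp: Dl_def meas_channel_def)


lemma dimDl[simp]: "dim_row (Dl Y) = 2" "dim_col (Dl Y) = 2"
  by (simp_all add: Dl_def meas_channel_def)

lemma sum_delta2:
  fixes x y n :: nat
  assumes "x < n" "y < n"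
  shows "(\<Sum>a<n. \<Sum>b<n. if a = x \<and> b = y then G a b else 0) = (G x y :: 'a::comm_monoid_add)"
proof -
  have "(\<Sum>a<n. \<Sum>b<n. if a = x \<and> b = y then G a b else 0) = (\<Sum>a<n. if a = x then G a y else 0)"
  proof (rule sum.cong[OF refl])
    fix a assume "a \<in> {..<n}"
    show "(\<Sum>b<n. if a = x \<and> b = y then G a b else 0) = (if a = x then G a y else 0)"
      using assms by (cases "a = x") (simp_all add: sum.delta')
  qed
  also have "\<dots> = G x y" using assms by (subst sum.delta) auto
  finally show ?thesis .
qed

lemma ext_formula:
  fixes n :: nat
  assumes F: "\<And>a b. F a b \<in> carrier_mat 2 2"
  shows "mat (2*n) (2*n) (\<lambda>(r,c). \<Sum>a<n. \<Sum>b<n. kron (Dl (F a b)) (ketbra n a b) $$ (r,c)) =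
    mat (2*n) (2*n) (\<lambda>(r,s). if r div n = s div n then
       (if r div n = 0 then complex_of_real (2/5) else - complex_of_real (2/5)) *
       (F (r mod n) (s mod n) $$ (0,0) + F (r mod n) (s mod n) $$ (1,1)) else 0)"
proof (rule eq_matI)
  fix r s assume "r < dim_row (mat (2*n) (2*n) (\<lambda>(r,s). if r div n = s div n then
       (if r div n = 0 then complex_of_real (2/5) else - complex_of_real (2/5)) *
       (F (r mod n) (s mod n) $$ (0,0) + F (r mod n) (s mod n) $$ (1,1)) else 0))"
    "s < dim_col (mat (2*n) (2*n) (\<lambda>(r,s). if r div n = s div n then
       (if r div n = 0 then complex_of_real (2/5) else - complex_of_real (2/5)) *
       (F (r mod n) (s mod n) $$ (0,0) + F (r mod n) (s mod n) $$ (1,1)) else 0))"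
  hence rs: "r < 2*n" "s < 2*n" by auto
  hence np: "n > 0" by auto
  have rm: "r mod n < n" "s mod n < n" using np by auto
  have rd: "r div n < 2" "s div n < 2" using rs by (auto simp: less_mult_imp_div_less)
  have ent: "kron (Dl (F a b)) (ketbra n a b) $$ (r,s) =
      (if a = r mod n \<and> b = s mod n then Dl (F a b) $$ (r div n, s div n) else 0)" if "a < n" "b < n" for a b
    unfolding kron_def ketbra_def using rs rm by auto
  have "(\<Sum>a<n. \<Sum>b<n. kron (Dl (F a b)) (ketbra n a b) $$ (r,s)) =
     Dl (F (r mod n) (s mod n)) $$ (r div n, s div n)"
  proof -
    have "(\<Sum>a<n. \<Sum>b<n. kron (Dl (F a b)) (ketbra n a b) $$ (r,s)) =
       (\<Sum>a<n. \<Sum>b<n. if a = r mod n \<and> b = s mod n then Dl (F a b) $$ (r div n, s div n) else 0)"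
      apply (rule sum.cong[OF refl])
      apply (rule sum.cong[OF refl])
      subgoal for a b using ent[of a b] by simp
      done
    also have "\<dots> = Dl (F (r mod n) (s mod n)) $$ (r div n, s div n)"
      by (rule sum_delta2[OF rm])
    finally show ?thesis .
  qed
  also have "\<dots> = (if r div n = s div n then
       (if r div n = 0 then complex_of_real (2/5) else - complex_of_real (2/5)) *
       (F (r mod n) (s mod n) $$ (0,0) + F (r mod n) (s mod n) $$ (1,1)) else 0)"
    unfolding delta_formula[OF F] using rd by simp
  finally show "mat (2*n) (2*n) (\<lambda>(r,c). \<Sum>a<n. \<Sum>b<n. kron (Dl (F a b)) (ketbra n a b) $$ (r,c)) $$ (r,s) =
    mat (2*n) (2*n) (\<lambda>(r,s). if r div n = s div n then
       (if r div n = 0 then complex_of_real (2/5) else - complex_of_real (2/5)) *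
       (F (r mod n) (s mod n) $$ (0,0) + F (r mod n) (s mod n) $$ (1,1)) else 0) $$ (r,s)"
    using rs by simp
qed auto



lemma ketbra_carr: "ketbra 2 a b \<in> carrier_mat 2 2" by (simp add: ketbra_def)
lemma block_carr: "block 2 n \<rho> a b \<in> carrier_mat 2 2" by (simp add: block_def)

lemma me_val: "me_norm 2 2 Dl = 4/5"
proof -
  define \<tau> where "\<tau> a b = ketbra 2 a b $$ (0,0) + ketbra 2 a b $$ (1,1)" for a b
  have ch: "choi 2 2 Dl = mat (2*2) (2*2) (\<lambda>(r,s). if r div 2 = s div 2 then
       (if r div 2 = 0 then complex_of_real (2/5) else - complex_of_real (2/5)) * \<tau> (r mod 2) (s mod 2) else 0)"
    unfolding choi_def \<tau>_def by (rule ext_formula[OF ketbra_carr])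
  have sc: "(1 / of_nat 2) \<cdot>\<^sub>m choi 2 2 Dl = mat (2*2) (2*2) (\<lambda>(r,s). if r div 2 = s div 2 then
       (if r div 2 = 0 then complex_of_real (1/5) else - complex_of_real (1/5)) * \<tau> (r mod 2) (s mod 2) else 0)"
    unfolding ch by (rule eq_matI) auto
  have tv: "\<tau> a b = (if a = b then 1 else 0)" if "a < 2" "b < 2" for a b
    using that unfolding \<tau>_def ketbra_def by auto
  have herm: "\<tau> a b = cnj (\<tau> b a)" if "a < 2" "b < 2" for a b
    using that by (simp add: tv)
  have pos: "0 \<le> Re (\<Sum>a<2. \<Sum>b<2. cnj (u a) * \<tau> a b * u b)" for u
  proof -
    have "(\<Sum>a<2. \<Sum>b<2. cnj (u a) * \<tau> a b * u b) = (\<Sum>a<2. \<Sum>b<2. cnj (u a) * (if a = b then 1 else 0) * u b)"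
      by (rule sum.cong[OF refl], rule sum.cong[OF refl]) (simp add: tv)
    also have "\<dots> = cnj (u 0) * u 0 + cnj (u 1) * u 1" by (simp add: numeral_2_eq_2)
    finally show ?thesis by simp
  qed
  have "me_norm 2 2 Dl = 2 * (1/5) * Re (\<Sum>a<2. \<tau> a a)"
    unfolding me_norm_def sc by (rule trace_norm_blk[OF herm pos]) auto
  also have "(\<Sum>a<2. \<tau> a a) = 2" by (simp add: tv)
  finally show ?thesis by simp
qed

lemma diamond_val:
  assumes n: "1 \<le> n" and D: "density (2*n) \<rho>"
  shows "trace_norm (ext_id 2 2 n Dl \<rho>) = 4/5"
proof -
  have P: "psd (2*n) \<rho>" and tr: "mtrace \<rho> = 1" using D unfolding density_def by auto
  have cr: "\<rho> \<in> carrier_mat (2*n) (2*n)" using P by (rule psd_carrier)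
  define \<tau> where "\<tau> a b = block 2 n \<rho> a b $$ (0,0) + block 2 n \<rho> a b $$ (1,1)" for a b
  have tv: "\<tau> a b = \<rho> $$ (a,b) + \<rho> $$ (n+a, n+b)" for a b
    unfolding \<tau>_def block_def by simp
  have ex: "ext_id 2 2 n Dl \<rho> = mat (2*n) (2*n) (\<lambda>(r,s). if r div n = s div n then
       (if r div n = 0 then complex_of_real (2/5) else - complex_of_real (2/5)) * \<tau> (r mod n) (s mod n) else 0)"
    unfolding ext_id_def \<tau>_def by (rule ext_formula[OF block_carr])
  have herm: "\<tau> a b = cnj (\<tau> b a)" if "a < n" "b < n" for a b
    unfolding tv using that psd_herm[OF P, of a b] psd_herm[OF P, of "n+a" "n+b"] by simp
  have pos: "0 \<le> Re (\<Sum>a<n. \<Sum>b<n. cnj (u a) * \<tau> a b * u b)" for u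
  proof -
    define w1 where "w1 i = (if i < n then u i else 0)" for i
    define w2 where "w2 i = (if i < n then 0 else u (i - n))" for i
    have q1: "(\<Sum>i<2*n. \<Sum>j<2*n. cnj (w1 i) * \<rho> $$ (i,j) * w1 j) = (\<Sum>a<n. \<Sum>b<n. cnj (u a) * \<rho> $$ (a,b) * u b)"
    proof -
      have e: "(\<Sum>a<n. \<Sum>b<n. cnj (w1 a) * \<rho> $$ (a,b) * w1 b) = (\<Sum>a<n. \<Sum>b<n. cnj (u a) * \<rho> $$ (a,b) * u b)"
        by (rule sum.cong[OF refl], rule sum.cong[OF refl]) (auto simp: w1_def)
      show ?thesis unfolding dsum2 e[symmetric] by (simp add: w1_def)
    qed
    have q2: "(\<Sum>i<2*n. \<Sum>j<2*n. cnj (w2 i) * \<rho> $$ (i,j) * w2 j) = (\<Sum>a<n. \<Sum>b<n. cnj (u a) * \<rho> $$ (n+a,n+b) * u b)"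
    proof -
      have e: "(\<Sum>a<n. \<Sum>b<n. cnj (w2 (n+a)) * \<rho> $$ (n+a,n+b) * w2 (n+b)) = (\<Sum>a<n. \<Sum>b<n. cnj (u a) * \<rho> $$ (n+a,n+b) * u b)"
        by (rule sum.cong[OF refl], rule sum.cong[OF refl]) (auto simp: w2_def)
      show ?thesis unfolding dsum2 e[symmetric] by (simp add: w2_def)
    qed
    have "(\<Sum>a<n. \<Sum>b<n. cnj (u a) * \<tau> a b * u b) =
       (\<Sum>a<n. \<Sum>b<n. cnj (u a) * \<rho> $$ (a,b) * u b) + (\<Sum>a<n. \<Sum>b<n. cnj (u a) * \<rho> $$ (n+a,n+b) * u b)"
      unfolding tv by (simp add: sum.distrib[symmetric] algebra_simps)
    hence "Re (\<Sum>a<n. \<Sum>b<n. cnj (u a) * \<tau> a b * u b) =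
       Re (\<Sum>i<2*n. \<Sum>j<2*n. cnj (w1 i) * \<rho> $$ (i,j) * w1 j) + Re (\<Sum>i<2*n. \<Sum>j<2*n. cnj (w2 i) * \<rho> $$ (i,j) * w2 j)"
      unfolding q1 q2 by simp
    thus ?thesis using psd_fun[OF P, of w1] psd_fun[OF P, of w2] by simp
  qed
  have "trace_norm (ext_id 2 2 n Dl \<rho>) = 2 * (2/5) * Re (\<Sum>a<n. \<tau> a a)"
    unfolding ex by (rule trace_norm_blk[OF herm pos]) auto
  also have "(\<Sum>a<n. \<tau> a a) = mtrace \<rho>"
    unfolding mtrace_def tv using cr by (simp add: sum_split2 sum.distrib)
  finally show ?thesis using tr by simp
qed



lemma sum22: "(\<Sum>i<(2::nat). \<Sum>j<(2::nat). F i j) = F 0 0 + F 0 1 + F 1 0 + (F 1 1 :: 'a::comm_monoid_add)"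
  by (simp add: numeral_2_eq_2 add.assoc)

lemma sum2: "(\<Sum>i<(2::nat). F i) = F 0 + (F 1 :: 'a::comm_monoid_add)"
  by (simp add: numeral_2_eq_2)

lemma psd_diag2:
  fixes x y :: real
  assumes A: "A \<in> carrier_mat 2 2" and e: "A $$ (0,1) = 0" "A $$ (1,0) = 0"
    "A $$ (0,0) = complex_of_real x" "A $$ (1,1) = complex_of_real y" and xy: "0 \<le> x" "0 \<le> y"
  shows "psd 2 A"
  unfolding psd_def
proof (intro conjI ballI)
  show "A \<in> carrier_mat 2 2" by (rule A)
  show "adjoint A = A"
  proof (rule eq_matI)
    fix i j assume "i < dim_row A" "j < dim_col A"
    hence ij: "i < 2" "j < 2" using A by auto
    have ad: "adjoint A $$ (i,j) = cnj (A $$ (j,i))" using A ij unfolding adjoint_def by simp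
    have "i = 0 \<or> i = 1" "j = 0 \<or> j = 1" using ij by auto
    thus "adjoint A $$ (i,j) = A $$ (i,j)" unfolding ad
      by (elim disjE) (simp_all only: e complex_cnj_complex_of_real complex_cnj_zero)
  qed (use A in \<open>auto simp: adjoint_def\<close>)
  fix v :: "complex vec"
  have "(\<Sum>i<2. \<Sum>j<2. cnj (v $ i) * A $$ (i,j) * v $ j) =
      complex_of_real x * (cnj (v $ 0) * v $ 0) + complex_of_real y * (cnj (v $ 1) * v $ 1)"
    unfolding sum22 e by simp
  thus "0 \<le> Re (\<Sum>i<2. \<Sum>j<2. cnj (v $ i) * A $$ (i,j) * v $ j)"
    using xy by simp
qed

lemma diag_comm:
  fixes A B :: "complex mat"
  assumes A: "A \<in> carrier_mat 2 2" and B: "B \<in> carrier_mat 2 2"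
    and e: "A $$ (0,1) = 0" "A $$ (1,0) = 0" "B $$ (0,1) = 0" "B $$ (1,0) = 0"
  shows "A * B = B * A"
proof (rule eq_matI)
  fix i j assume "i < dim_row (B * A)" "j < dim_col (B * A)"
  hence ij: "i < 2" "j < 2" using A B by auto
  have "i = 0 \<or> i = 1" "j = 0 \<or> j = 1" using ij by auto
  have e': "A $$ (0,Suc 0) = 0" "A $$ (Suc 0,0) = 0" "B $$ (0,Suc 0) = 0" "B $$ (Suc 0,0) = 0"
    using e by simp_all
  show "(A * B) $$ (i,j) = (B * A) $$ (i,j)"
    unfolding mult_entry[OF A B ij] mult_entry[OF B A ij]
    unfolding sum2 using \<open>i = 0 \<or> i = 1\<close> \<open>j = 0 \<or> j = 1\<close> by (elim disjE; simp add: e' mult.commute)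
qed (use A B in auto)

lemma Ment: "Mex 0 $$ (0,1) = 0" "Mex 0 $$ (1,0) = 0" "Mex 1 $$ (0,1) = 0" "Mex 1 $$ (1,0) = 0"
  "Nex 0 $$ (0,1) = 0" "Nex 0 $$ (1,0) = 0" "Nex 1 $$ (0,1) = 0" "Nex 1 $$ (1,0) = 0"
  by (simp_all add: Mex_def Nex_def ents)

lemma Mdiag: "Mex 0 $$ (0,0) = complex_of_real (9/10)" "Mex 0 $$ (1,1) = complex_of_real (6/10)"
  "Mex 1 $$ (0,0) = complex_of_real (1/10)" "Mex 1 $$ (1,1) = complex_of_real (4/10)"
  "Nex 0 $$ (0,0) = complex_of_real (5/10)" "Nex 0 $$ (1,1) = complex_of_real (2/10)"
  "Nex 1 $$ (0,0) = complex_of_real (5/10)" "Nex 1 $$ (1,1) = complex_of_real (8/10)"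
  by (simp_all add: Mex_def Nex_def ents)

lemma psdMN: "psd 2 (Mex 0)" "psd 2 (Mex 1)" "psd 2 (Nex 0)" "psd 2 (Nex 1)"
  by (rule psd_diag2[OF carr(3) Ment(1,2) Mdiag(1,2)], simp, simp)
     (rule psd_diag2[OF carr(3) Ment(3,4) Mdiag(3,4)], simp, simp,
      rule psd_diag2[OF carr(4) Ment(5,6) Mdiag(5,6)], simp, simp,
      rule psd_diag2[OF carr(4) Ment(7,8) Mdiag(7,8)], simp, simp)

lemma povmM: "is_povm 2 2 Mex"
  unfolding is_povm_def
proof (intro conjI allI impI)
  fix i :: nat assume "i < 2"
  hence "i = 0 \<or> i = 1" by auto
  thus "psd 2 (Mex i)" using psdMN by auto
next
  fix r c :: nat assume "r < 2" "c < 2"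
  thus "(\<Sum>i<2. Mex i $$ (r,c)) = 1\<^sub>m 2 $$ (r,c)" by (simp add: sum2 Mex_def)
qed

lemma povmN: "is_povm 2 2 Nex"
  unfolding is_povm_def
proof (intro conjI allI impI)
  fix i :: nat assume "i < 2"
  hence "i = 0 \<or> i = 1" by auto
  thus "psd 2 (Nex i)" using psdMN by auto
next
  fix r c :: nat assume "r < 2" "c < 2"
  thus "(\<Sum>i<2. Nex i $$ (r,c)) = 1\<^sub>m 2 $$ (r,c)" by (simp add: sum2 Nex_def)
qed

lemma diffMN: "M0ex - N0ex = (2/5 :: complex) \<cdot>\<^sub>m 1\<^sub>m 2"
proof (rule eq_matI)
  fix i j assume "i < dim_row ((2/5 :: complex) \<cdot>\<^sub>m 1\<^sub>m 2)" "j < dim_col ((2/5 :: complex) \<cdot>\<^sub>m 1\<^sub>m 2)"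
  hence "i = 0 \<or> i = 1" "j = 0 \<or> j = 1" by auto
  thus "(M0ex - N0ex) $$ (i,j) = ((2/5 :: complex) \<cdot>\<^sub>m 1\<^sub>m 2) $$ (i,j)"
    by (elim disjE) (simp_all add: ents)
qed auto

definition rho0 :: "complex mat" where
  "rho0 = mat 2 2 (\<lambda>(i,j). if i = 0 \<and> j = 0 then 1 else 0)"

lemma rho0_density: "density (2*1) rho0"
proof -
  have "psd 2 rho0"
    by (rule psd_diag2[where x=1 and y=0]) (auto simp: rho0_def)
  moreover have "mtrace rho0 = 1" by (simp add: mtrace_def rho0_def sum2)
  ultimately show ?thesis by (simp add: density_def)
qed

lemma diamond_eq: "diamond_norm 2 2 Dl = 4/5"
proof -
  have "{trace_norm (ext_id 2 2 n Dl \<rho>) | n \<rho>. 1 \<le> n \<and> density (2*n) \<rho>} = {4/5}"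
  proof
    show "{trace_norm (ext_id 2 2 n Dl \<rho>) | n \<rho>. 1 \<le> n \<and> density (2*n) \<rho>} \<subseteq> {4/5}"
    proof
      fix x assume "x \<in> {trace_norm (ext_id 2 2 n Dl \<rho>) | n \<rho>. 1 \<le> n \<and> density (2*n) \<rho>}"
      then obtain n \<rho> where "x = trace_norm (ext_id 2 2 n Dl \<rho>)" "1 \<le> n" "density (2*n) \<rho>" by blast
      thus "x \<in> {4/5}" using diamond_val[of n \<rho>] by simp
    qed
    have v: "trace_norm (ext_id 2 2 1 Dl rho0) = 4/5" by (rule diamond_val[OF le_refl rho0_density])
    show "{4/5} \<subseteq> {trace_norm (ext_id 2 2 n Dl \<rho>) | n \<rho>. 1 \<le> n \<and> density (2*n) \<rho>}"
    proof
      fix x :: real assume "x \<in> {4/5}"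
      hence "x = trace_norm (ext_id 2 2 1 Dl rho0)" using v by simp
      thus "x \<in> {trace_norm (ext_id 2 2 n Dl \<rho>) | n \<rho>. 1 \<le> n \<and> density (2*n) \<rho>}"
        using rho0_density by blast
    qed
  qed
  thus ?thesis unfolding diamond_norm_def by (simp only: cSup_singleton)
qed

lemma MEBC_ex: "MEBC 2 2 Mex Nex"
proof -
  have "(\<lambda>\<rho>. meas_channel 2 Mex \<rho> - meas_channel 2 Nex \<rho>) = Dl" by (simp add: Dl_def[abs_def])
  thus ?thesis unfolding MEBC_def Let_def by (simp only: me_val diamond_eq)
qed

theorem corollary4:
  shows "(\<exists>d M N. 1 \<le> d \<and> is_povm d 2 M \<and> is_povm d 2 N \<and>
            M 0 * N 0 = N 0 * M 0 \<and> M 1 * N 1 = N 1 * M 1 \<and> MEBC d 2 M N)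
       \<and> (is_povm 2 2 Mex \<and> is_povm 2 2 Nex \<and>
            Mex 0 * Nex 0 = Nex 0 * Mex 0 \<and> Mex 1 * Nex 1 = Nex 1 * Mex 1 \<and>
            M0ex - N0ex = (2/5 :: complex) \<cdot>\<^sub>m 1\<^sub>m 2 \<and> MEBC 2 2 Mex Nex)"
proof -
  have c0: "Mex 0 * Nex 0 = Nex 0 * Mex 0" by (rule diag_comm[OF carr(3) carr(4)]) (simp_all only: Ment)
  have c1: "Mex 1 * Nex 1 = Nex 1 * Mex 1" by (rule diag_comm[OF carr(3) carr(4)]) (simp_all only: Ment)
  have R: "is_povm 2 2 Mex \<and> is_povm 2 2 Nex \<and>
            Mex 0 * Nex 0 = Nex 0 * Mex 0 \<and> Mex 1 * Nex 1 = Nex 1 * Mex 1 \<and>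
            M0ex - N0ex = (2/5 :: complex) \<cdot>\<^sub>m 1\<^sub>m 2 \<and> MEBC 2 2 Mex Nex"
    by (intro conjI povmM povmN c0 c1 diffMN MEBC_ex)
  show ?thesis
  proof
    show "\<exists>d M N. 1 \<le> d \<and> is_povm d 2 M \<and> is_povm d 2 N \<and>
            M 0 * N 0 = N 0 * M 0 \<and> M 1 * N 1 = N 1 * M 1 \<and> MEBC d 2 M N"
      by (rule exI[of _ 2], rule exI[of _ Mex], rule exI[of _ Nex]) (intro conjI povmM povmN c0 c1 MEBC_ex, simp)
  qed (rule R)
qed


end
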